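(* Let $X$ be a $[0,1]^d$-valued continuous random variable such that $h(X)$ and $H(\lfloor X\rfloor)$ are finite. Then $$\lim_{k\to\infty}I\big(\lfloor 2^kX\rfloor;\{2^kX\}\big)=0.$$
   Context: $\lfloor\cdot\rfloor$ and $\{x\}=x-\lfloor x\rfloor$ (integer and fractional parts) are applied componentwise. $I$ denotes mutual information, $H$ Shannon entropy, $h$ differential entropy; "continuous" means absolutely continuous w.r.t. Lebesgue measure. *)

theory Defs
  imports "HOL-Analysis.Analysis" "HOL-Probability.Probability"
begin

end

theory Submission
  imports Defs
begin


definition rfl :: "('d::finite \<Rightarrow> bool) \<Rightarrow> real^'d \<Rightarrow> real^'d" where
  "rfl \<sigma> x = (\<chi> i. if \<sigma> i then - x$i else x$i)"

lemma rfl_rfl[simp]: "rfl \<sigma> (rfl \<sigma> x) = x"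
  by (simp add: rfl_def vec_eq_iff)

lemma linear_rfl: "linear (rfl \<sigma>)"
  by (rule linearI) (auto simp: rfl_def vec_eq_iff)

lemma rfl_measurable[measurable]: "rfl \<sigma> \<in> borel_measurable borel"
  using linear_rfl linear_continuous_at continuous_at_imp_continuous_on
  by (metis borel_measurable_continuous_onI linear_conv_bounded_linear linear_continuous_on)

lemma rfl_axis: "rfl \<sigma> (axis i 1) = axis i (if \<sigma> i then -1 else 1)"
  by (auto simp: rfl_def vec_eq_iff axis_def)

lemma rfl_basis_inner: "j \<in> Basis \<Longrightarrow> \<bar>rfl \<sigma> j \<bullet> j\<bar> = 1"
  by (auto simp: Basis_vec_def rfl_axis inner_axis_axis)

lemma rfl_basis: "j \<in> Basis \<Longrightarrow> rfl \<sigma> j = (rfl \<sigma> j \<bullet> j) *\<^sub>R j"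
  unfolding Basis_vec_def by (auto simp: rfl_axis inner_axis_axis) (auto simp: vec_eq_iff axis_def)

lemma rfl_sum: "rfl \<sigma> x = (\<Sum>j\<in>Basis. ((rfl \<sigma> j \<bullet> j) * (x \<bullet> j)) *\<^sub>R j)"
proof -
  have "rfl \<sigma> x = rfl \<sigma> (\<Sum>j\<in>Basis. (x \<bullet> j) *\<^sub>R j)" by (simp add: euclidean_representation)
  also have "\<dots> = (\<Sum>j\<in>Basis. (x \<bullet> j) *\<^sub>R rfl \<sigma> j)"
    by (simp add: linear_sum[OF linear_rfl] linear_cmul[OF linear_rfl] o_def)
  also have "\<dots> = (\<Sum>j\<in>Basis. ((rfl \<sigma> j \<bullet> j) * (x \<bullet> j)) *\<^sub>R j)"
    by (intro sum.cong refl) (subst rfl_basis, auto)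
  finally show ?thesis .
qed

lemma distr_rfl: fixes \<sigma> :: "'d::finite \<Rightarrow> bool" shows "distr lborel borel (rfl \<sigma>) = lborel"
proof -
  have c: "\<And>j. j \<in> Basis \<Longrightarrow> \<bar>rfl \<sigma> j \<bullet> j\<bar> = 1"
    by (rule rfl_basis_inner)
  have "lborel = density (distr lborel borel (\<lambda>x. 0 + (\<Sum>j\<in>Basis. ((rfl \<sigma> j \<bullet> j) * (x \<bullet> j)) *\<^sub>R j)))
      (\<lambda>_. (\<Prod>j\<in>(Basis::(real^'d) set). \<bar>rfl \<sigma> j \<bullet> j\<bar>))"
    by (rule lborel_affine_euclidean) (use c in fastforce)
  also have "(\<lambda>x. 0 + (\<Sum>j\<in>Basis. ((rfl \<sigma> j \<bullet> j) * (x \<bullet> j)) *\<^sub>R j)) = rfl \<sigma>"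
    by (simp add: rfl_sum[symmetric] fun_eq_iff)
  also have "(\<Prod>j\<in>(Basis::(real^'d) set). \<bar>rfl \<sigma> j \<bullet> j\<bar>) = 1"
    by (simp add: c)
  finally show ?thesis by (simp add: density_1)
qed

lemma AE_lborel_not_negligible:
  assumes "negligible N" shows "AE x in lborel. x \<notin> N"
proof -
  have "N \<in> null_sets lebesgue" using assms negligible_iff_null_sets by blast
  then have "AE x in lebesgue. x \<notin> N" by (rule AE_not_in)
  then show ?thesis by (simp add: AE_completion_iff)
qed

lemma corner_AE:
  fixes F :: "real^'d \<Rightarrow> real"
  assumes si: "\<And>a b. set_integrable lborel (cbox a b) F"
  shows "AE x in lborel. ((\<lambda>h. (LINT y:cbox x (x + h *\<^sub>R One)|lborel. F y) / h ^ CARD('d)) \<longlongrightarrow> F x) (at_right 0)"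
proof -
  have "F integrable_on cbox a b" for a b
    using set_borel_integral_eq_integral(1)[OF si] by auto
  then obtain N where N: "negligible N" and conv: "\<And>x e. \<lbrakk>x \<notin> N; 0 < e\<rbrakk> \<Longrightarrow>
               \<exists>d>0. \<forall>h. 0 < h \<and> h < d \<longrightarrow>
                         norm(integral (cbox x (x + h *\<^sub>R One)) F /\<^sub>R h ^ DIM(real^'d) - F x) < e"
    using integrable_ccontinuous_explicit[of F] by metis
  from AE_lborel_not_negligible[OF N]
  show ?thesis
  proof (rule AE_mp, intro AE_I2 impI)
    fix x assume x: "x \<notin> N"
    show "((\<lambda>h. (LINT y:cbox x (x + h *\<^sub>R One)|lborel. F y) / h ^ CARD('d)) \<longlongrightarrow> F x) (at_right 0)"
      unfolding tendsto_iff
    proof (intro allI impI)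
      fix e :: real assume e: "0 < e"
      obtain d where d: "d > 0" "\<And>h. 0 < h \<Longrightarrow> h < d \<Longrightarrow>
          norm(integral (cbox x (x + h *\<^sub>R One)) F /\<^sub>R h ^ DIM(real^'d) - F x) < e"
        using conv[OF x e] by blast
      have "eventually (\<lambda>h. h \<in> {0<..<d}) (at_right (0::real))"
        using d(1) by (rule eventually_at_right_real)
      then show "eventually (\<lambda>h. dist ((LINT y:cbox x (x + h *\<^sub>R One)|lborel. F y) / h ^ CARD('d)) (F x) < e) (at_right 0)"
      proof (rule eventually_mono)
        fix h assume h: "h \<in> {0<..<d}"
        have "(LINT y:cbox x (x + h *\<^sub>R One)|lborel. F y) = integral (cbox x (x + h *\<^sub>R One)) F"
          by (rule set_borel_integral_eq_integral(2)[OF si])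
        then show "dist ((LINT y:cbox x (x + h *\<^sub>R One)|lborel. F y) / h ^ CARD('d)) (F x) < e"
          using d(2)[of h] h by (simp add: dist_real_def divide_inverse mult.commute)
      qed
    qed
  qed
qed

lemma AE_rfl:
  fixes \<sigma> :: "'d::finite \<Rightarrow> bool"
  assumes "AE z in lborel. P z" shows "AE x in lborel. P (rfl \<sigma> x)"
proof -
  from assms obtain N where N: "{z \<in> space lborel. \<not> P z} \<subseteq> N" "emeasure lborel N = 0" "N \<in> sets lborel"
    by (rule AE_E)
  have "emeasure lborel (rfl \<sigma> -` N \<inter> space lborel) = emeasure (distr lborel borel (rfl \<sigma>)) N"
    using N(3) by (simp add: emeasure_distr)
  also have "\<dots> = 0" using N(2) by (simp add: distr_rfl)
  finally show ?thesis
    by (intro AE_I[of _ _ "rfl \<sigma> -` N \<inter> space lborel"])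
      (use N(1) N(3) measurable_sets_borel[OF rfl_measurable, of N \<sigma>] in auto)
qed

lemma integrable_rfl:
  fixes f :: "real^'d \<Rightarrow> real"
  assumes "integrable lborel f" shows "integrable lborel (\<lambda>x. f (rfl \<sigma> x))"
proof -
  have "integrable (distr lborel borel (rfl \<sigma>)) f" using assms by (simp add: distr_rfl)
  moreover have "f \<in> borel_measurable borel" using borel_measurable_integrable[OF assms] by simp
  ultimately show ?thesis by (subst (asm) integrable_distr_eq) auto
qed

lemma integral_rfl:
  fixes f :: "real^'d \<Rightarrow> real"
  assumes [measurable]: "f \<in> borel_measurable borel"
  shows "(\<integral>x. f (rfl \<sigma> x) \<partial>lborel) = (\<integral>x. f x \<partial>lborel)"
proof -
  have "(\<integral>x. f x \<partial>lborel) = (\<integral>x. f x \<partial>distr lborel borel (rfl \<sigma>))" by (simp add: distr_rfl)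
  also have "\<dots> = (\<integral>x. f (rfl \<sigma> x) \<partial>lborel)" by (rule integral_distr) (use assms in auto)
  finally show ?thesis ..
qed

definition orth :: "('d::finite \<Rightarrow> bool) \<Rightarrow> real^'d \<Rightarrow> real \<Rightarrow> (real^'d) set" where
  "orth \<sigma> x h = rfl \<sigma> -` cbox (rfl \<sigma> x) (rfl \<sigma> x + h *\<^sub>R One)"

lemma orth_sets[measurable]: "orth \<sigma> x h \<in> sets lborel"
  unfolding orth_def using measurable_sets_borel[OF rfl_measurable, of "cbox (rfl \<sigma> x) (rfl \<sigma> x + h *\<^sub>R One)" \<sigma>] by simp

lemma orth_AE:
  fixes f :: "real^'d \<Rightarrow> real"
  assumes f: "integrable lborel f"
  shows "AE x in lborel. ((\<lambda>h. (LINT w:orth \<sigma> x h|lborel. \<bar>f w - r\<bar>) / h ^ CARD('d)) \<longlongrightarrow> \<bar>f x - r\<bar>) (at_right 0)"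
proof -
  define F where "F z = \<bar>f (rfl \<sigma> z) - r\<bar>" for z
  have fm[measurable]: "f \<in> borel_measurable borel" using borel_measurable_integrable[OF f] by simp
  have fr: "integrable lborel (\<lambda>x. f (rfl \<sigma> x))" by (rule integrable_rfl[OF f])
  have si: "set_integrable lborel (cbox a b) F" for a b
  proof -
    have i1: "integrable lborel (\<lambda>z. f (rfl \<sigma> z) * indicator (cbox a b) z)"
      by (rule integrable_real_mult_indicator[OF _ fr]) auto
    have i2: "integrable lborel (\<lambda>z. indicator (cbox a b) z * r)"
      using emeasure_lborel_cbox_finite[of a b]
      by (intro integrable_mult_left integrable_real_indicator) auto
    have "integrable lborel (\<lambda>z. \<bar>f (rfl \<sigma> z) * indicator (cbox a b) z - indicator (cbox a b) z * r\<bar>)"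
      by (rule integrable_abs, rule Bochner_Integration.integrable_diff[OF i1 i2])
    then show ?thesis
      unfolding set_integrable_def F_def
      by (rule Bochner_Integration.integrable_cong[THEN iffD1, rotated -1]) (auto simp: indicator_def)
  qed
  have "AE x in lborel. ((\<lambda>h. (LINT y:cbox (rfl \<sigma> x) (rfl \<sigma> x + h *\<^sub>R One)|lborel. F y) / h ^ CARD('d)) \<longlongrightarrow> F (rfl \<sigma> x)) (at_right 0)"
    by (rule AE_rfl[OF corner_AE[OF si]])
  moreover have "(LINT y:cbox (rfl \<sigma> x) (rfl \<sigma> x + h *\<^sub>R One)|lborel. F y) = (LINT w:orth \<sigma> x h|lborel. \<bar>f w - r\<bar>)" for x h
  proof -
    have "(LINT w:orth \<sigma> x h|lborel. \<bar>f w - r\<bar>) = (\<integral>w. indicator (orth \<sigma> x h) w * \<bar>f w - r\<bar> \<partial>lborel)"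
      by (simp add: set_lebesgue_integral_def)
    also have "\<dots> = (\<integral>y. indicator (orth \<sigma> x h) (rfl \<sigma> y) * \<bar>f (rfl \<sigma> y) - r\<bar> \<partial>lborel)"
      by (rule integral_rfl[symmetric]) measurable
    also have "\<dots> = (LINT y:cbox (rfl \<sigma> x) (rfl \<sigma> x + h *\<^sub>R One)|lborel. F y)"
      by (simp add: set_lebesgue_integral_def F_def orth_def indicator_def)
    finally show ?thesis ..
  qed
  ultimately show ?thesis by (simp add: F_def)
qed

lemma integrable_ind_abs:
  fixes f :: "real^'d \<Rightarrow> real"
  assumes f: "integrable lborel f" and S: "S \<in> sets lborel" "emeasure lborel S < \<infinity>"
  shows "integrable lborel (\<lambda>w. indicator S w * \<bar>f w - c\<bar>)"
proof -
  have i1: "integrable lborel (\<lambda>z. f z * indicator S z)"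
    by (rule integrable_real_mult_indicator[OF S(1) f])
  have i2: "integrable lborel (\<lambda>z. indicator S z * c)"
    using S by (intro integrable_mult_left integrable_real_indicator) auto
  have "integrable lborel (\<lambda>z. \<bar>f z * indicator S z - indicator S z * c\<bar>)"
    by (rule integrable_abs, rule Bochner_Integration.integrable_diff[OF i1 i2])
  then show ?thesis
    by (rule Bochner_Integration.integrable_cong[THEN iffD1, rotated -1]) (auto simp: indicator_def)
qed

lemma Basis_sum_nth[simp]: "(\<Sum>x\<in>(Basis::(real^'d) set). x $ i) = 1"
proof -
  have B: "(Basis::(real^'d) set) = (\<lambda>j. axis j (1::real)) ` UNIV" by (auto simp: Basis_vec_def)
  have inj: "inj (\<lambda>j. axis j (1::real) :: real^'d)" by (auto simp: inj_on_def axis_eq_axis)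
  have "(\<Sum>x\<in>(Basis::(real^'d) set). x $ i) = (\<Sum>j\<in>UNIV. (axis j (1::real) :: real^'d) $ i)"
    unfolding B by (subst sum.reindex[OF inj]) simp
  also have "\<dots> = 1" by (simp add: axis_def)
  finally show ?thesis .
qed

lemma One_nth[simp]: "(One::real^'d) $ i = 1"
  by simp

lemma inner_Basis_vec: "b \<in> (Basis::(real^'d) set) \<Longrightarrow> \<exists>j. (\<forall>y. y \<bullet> b = y $ j)"
  unfolding Basis_vec_def by (auto simp: cart_eq_inner_axis)

lemma orth_cover:
  fixes x w :: "real^'d"
  assumes "w \<in> cbox (x - h *\<^sub>R One) (x + h *\<^sub>R One)"
  shows "w \<in> orth (\<lambda>i. w$i < x$i) x h"
proof -
  have H: "x$i - h \<le> w$i \<and> w$i \<le> x$i + h" for i using assms by (simp add: mem_box_cart)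
  show ?thesis unfolding orth_def vimage_eq mem_box_cart
    apply (intro allI)
    subgoal for i using H[of i] by (auto simp: rfl_def)
    done
qed

lemma measure_cbox_sym:
  assumes "0 \<le> h"
  shows "measure lborel (cbox (x - h *\<^sub>R One) (x + h *\<^sub>R (One::real^'d))) = (2*h) ^ CARD('d)"
proof -
  have *: "\<And>b::real^'d. b \<in> Basis \<Longrightarrow> (x + h *\<^sub>R One - (x - h *\<^sub>R One)) \<bullet> b = 2 * h"
    by (drule inner_Basis_vec) auto
  have **: "\<And>b::real^'d. b \<in> Basis \<Longrightarrow> (x - h *\<^sub>R One) \<bullet> b \<le> (x + h *\<^sub>R One) \<bullet> b"
    using assms by (drule_tac inner_Basis_vec) auto
  have "(\<Prod>b\<in>(Basis::(real^'d) set). (x + h *\<^sub>R One - (x - h *\<^sub>R One)) \<bullet> b) = (\<Prod>b\<in>(Basis::(real^'d) set). 2*h)"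
    by (rule prod.cong[OF refl]) (rule *)
  also have "\<dots> = (2*h) ^ CARD('d)" by simp
  finally show ?thesis using ** by (subst measure_lborel_cbox_eq) simp
qed

lemma emeasure_orth_finite: "emeasure lborel (orth \<sigma> x h) < \<infinity>"
proof -
  have "emeasure lborel (orth \<sigma> x h) = emeasure (distr lborel borel (rfl \<sigma>)) (cbox (rfl \<sigma> x) (rfl \<sigma> x + h *\<^sub>R One))"
    by (subst emeasure_distr) (auto simp: orth_def)
  then show ?thesis using emeasure_lborel_cbox_finite[of "rfl \<sigma> x" "rfl \<sigma> x + h *\<^sub>R One"]
    by (simp add: distr_rfl)
qed

lemma lebesgue_point:
  fixes f :: "real^'d \<Rightarrow> real"
  assumes f: "integrable lborel f"
  shows "AE x in lborel. ((\<lambda>h. (LINT w:cbox (x - h *\<^sub>R One) (x + h *\<^sub>R One)|lborel. \<bar>f w - f x\<bar>) / h ^ CARD('d)) \<longlongrightarrow> 0) (at_right 0)"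
proof -
  let ?avg = "\<lambda>\<sigma> r x h. (LINT w:orth \<sigma> x h|lborel. \<bar>f w - r\<bar>) / h ^ CARD('d)"
  have "AE x in lborel. \<forall>r\<in>\<rat>. \<forall>\<sigma>\<in>(UNIV::('d \<Rightarrow> bool) set). (?avg \<sigma> r x \<longlongrightarrow> \<bar>f x - r\<bar>) (at_right 0)"
    by (intro AE_ball_countable' orth_AE[OF f]) (auto simp: countable_rat)
  then show ?thesis
  proof (rule AE_mp, intro AE_I2 impI)
    fix x assume H: "\<forall>r\<in>\<rat>. \<forall>\<sigma>\<in>(UNIV::('d \<Rightarrow> bool) set). (?avg \<sigma> r x \<longlongrightarrow> \<bar>f x - r\<bar>) (at_right 0)"
    let ?K = "real (card (UNIV::('d \<Rightarrow> bool) set))"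
    let ?n = "CARD('d)"
    show "((\<lambda>h. (LINT w:cbox (x - h *\<^sub>R One) (x + h *\<^sub>R One)|lborel. \<bar>f w - f x\<bar>) / h ^ ?n) \<longlongrightarrow> 0) (at_right 0)"
      unfolding tendsto_iff
    proof (intro allI impI)
      fix e :: real assume e: "0 < e"
      define \<delta> where "\<delta> = (e/2) / (2 * ?K + 2 ^ ?n)"
      have K0: "?K \<ge> 0" by simp
      have \<delta>0: "\<delta> > 0" using e by (simp add: \<delta>_def add_nonneg_pos)
      obtain r where r: "r \<in> \<rat>" "f x - \<delta> < r" "r < f x + \<delta>"
        using Rats_dense_in_real[of "f x - \<delta>" "f x + \<delta>"] \<delta>0 by auto
      have rd: "\<bar>f x - r\<bar> < \<delta>" using r by auto
      have ev1: "\<forall>\<^sub>F h in at_right 0. \<forall>\<sigma>. dist (?avg \<sigma> r x h) \<bar>f x - r\<bar> < \<delta>"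
        by (rule eventually_all_finite) (use H r(1) \<delta>0 in \<open>auto simp: tendsto_iff\<close>)
      have ev2: "\<forall>\<^sub>F h in at_right (0::real). 0 < h" by (simp add: eventually_at_right_less)
      show "\<forall>\<^sub>F h in at_right 0. dist ((LINT w:cbox (x - h *\<^sub>R One) (x + h *\<^sub>R One)|lborel. \<bar>f w - f x\<bar>) / h ^ ?n) 0 < e"
        using ev1 ev2
      proof (eventually_elim)
        case (elim h)
        let ?C = "cbox (x - h *\<^sub>R One) (x + h *\<^sub>R One)"
        have h0: "0 < h" using elim by simp
        have avg_lt: "?avg \<sigma> r x h < \<bar>f x - r\<bar> + \<delta>" for \<sigma>
          using spec[OF elim(1), of \<sigma>] by (auto simp: dist_real_def abs_less_iff)
        have ptw: "indicator ?C w * \<bar>f w - f x\<bar> \<le>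
            (\<Sum>\<sigma>\<in>UNIV. indicator (orth \<sigma> x h) w * \<bar>f w - r\<bar>) + indicator ?C w * \<bar>f x - r\<bar>" for w
        proof (cases "w \<in> ?C")
          case True
          have "\<bar>f w - r\<bar> = indicator (orth (\<lambda>i. w$i < x$i) x h) w * \<bar>f w - r\<bar>"
            using orth_cover[OF True] by simp
          also have "\<dots> \<le> (\<Sum>\<sigma>\<in>UNIV. indicator (orth \<sigma> x h) w * \<bar>f w - r\<bar>)"
            by (rule member_le_sum) auto
          finally show ?thesis using True by auto
        next
          case False
          then show ?thesis by (auto intro!: sum_nonneg)
        qed
        have iC: "integrable lborel (\<lambda>w. indicator ?C w * \<bar>f w - f x\<bar>)"
          by (rule integrable_ind_abs[OF f]) (use emeasure_lborel_cbox_finite[of "x - h *\<^sub>R One" "x + h *\<^sub>R One"] in auto)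
        have iO: "integrable lborel (\<lambda>w. indicator (orth \<sigma> x h) w * \<bar>f w - r\<bar>)" for \<sigma>
          by (rule integrable_ind_abs[OF f]) (use orth_sets emeasure_orth_finite in auto)
        have iC2: "integrable lborel (\<lambda>w. indicator ?C w * \<bar>f x - r\<bar>)"
          using emeasure_lborel_cbox_finite by (intro integrable_mult_left integrable_real_indicator) auto
        have "(LINT w:?C|lborel. \<bar>f w - f x\<bar>) = (\<integral>w. indicator ?C w * \<bar>f w - f x\<bar> \<partial>lborel)"
          by (simp add: set_lebesgue_integral_def)
        also have "\<dots> \<le> (\<integral>w. (\<Sum>\<sigma>\<in>UNIV. indicator (orth \<sigma> x h) w * \<bar>f w - r\<bar>) + indicator ?C w * \<bar>f x - r\<bar> \<partial>lborel)"
          by (rule integral_mono[OF iC _ ptw]) (intro Bochner_Integration.integrable_add Bochner_Integration.integrable_sum iO iC2)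
        also have "\<dots> = (\<integral>w. (\<Sum>\<sigma>\<in>UNIV. indicator (orth \<sigma> x h) w * \<bar>f w - r\<bar>) \<partial>lborel) + (\<integral>w. indicator ?C w * \<bar>f x - r\<bar> \<partial>lborel)"
          by (rule Bochner_Integration.integral_add) (intro Bochner_Integration.integrable_sum iO, rule iC2)
        also have "(\<integral>w. (\<Sum>\<sigma>\<in>UNIV. indicator (orth \<sigma> x h) w * \<bar>f w - r\<bar>) \<partial>lborel) = (\<Sum>\<sigma>\<in>UNIV. (LINT w:orth \<sigma> x h|lborel. \<bar>f w - r\<bar>))"
          unfolding set_lebesgue_integral_def by (subst Bochner_Integration.integral_sum) (use iO in auto)
        also have "(\<integral>w. indicator ?C w * \<bar>f x - r\<bar> \<partial>lborel) = \<bar>f x - r\<bar> * (2*h) ^ ?n"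
          using h0 emeasure_lborel_cbox_finite[of "x - h *\<^sub>R One" "x + h *\<^sub>R One"]
          by (simp add: measure_cbox_sym)
        finally have le1: "(LINT w:?C|lborel. \<bar>f w - f x\<bar>) \<le> (\<Sum>\<sigma>\<in>UNIV. (LINT w:orth \<sigma> x h|lborel. \<bar>f w - r\<bar>)) + \<bar>f x - r\<bar> * (2*h) ^ ?n" .
        have hn: "h ^ ?n > 0" using h0 by simp
        have nonneg: "0 \<le> (LINT w:?C|lborel. \<bar>f w - f x\<bar>)"
          by (simp add: set_lebesgue_integral_def)
        have "(LINT w:?C|lborel. \<bar>f w - f x\<bar>) / h ^ ?n \<le> ((\<Sum>\<sigma>\<in>UNIV. (LINT w:orth \<sigma> x h|lborel. \<bar>f w - r\<bar>)) + \<bar>f x - r\<bar> * (2*h) ^ ?n) / h ^ ?n"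
          by (rule divide_right_mono[OF le1]) (use hn in simp)
        also have "\<dots> = (\<Sum>\<sigma>\<in>UNIV. ?avg \<sigma> r x h) + \<bar>f x - r\<bar> * 2 ^ ?n"
          using hn h0 by (simp add: add_divide_distrib sum_divide_distrib power_mult_distrib)
        also have "\<dots> \<le> (\<Sum>\<sigma>\<in>(UNIV::('d \<Rightarrow> bool) set). \<bar>f x - r\<bar> + \<delta>) + \<delta> * 2 ^ ?n"
          by (intro add_mono sum_mono less_imp_le[OF avg_lt] mult_right_mono less_imp_le[OF rd]) auto
        also have "\<dots> \<le> ?K * (2 * \<delta>) + \<delta> * 2 ^ ?n"
          using rd by (simp add: mult_left_mono)
        also have "\<dots> = e/2"
        proof -
          have pos: "2 * ?K + 2 ^ ?n > 0" by (simp add: add_nonneg_pos)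
          have "?K * (2 * \<delta>) + \<delta> * 2 ^ ?n = \<delta> * (2 * ?K + 2 ^ ?n)" by (simp add: algebra_simps)
          also have "\<dots> = e/2" unfolding \<delta>_def using pos by (simp add: field_simps)
          finally show ?thesis .
        qed
        finally have G: "(LINT w:?C|lborel. \<bar>f w - f x\<bar>) / h ^ ?n \<le> e/2" .
        have G0: "0 \<le> (LINT w:?C|lborel. \<bar>f w - f x\<bar>) / h ^ ?n" using nonneg hn by simp
        show ?case unfolding dist_real_def diff_zero abs_of_nonneg[OF G0] using G e by linarith
      qed
    qed
  qed
qed



lemma borel_measurable_vec_lambda[measurable (raw)]:
  fixes f :: "'d::finite \<Rightarrow> 'a \<Rightarrow> real"
  assumes "\<And>i. f i \<in> borel_measurable M"
  shows "(\<lambda>x. \<chi> i. f i x) \<in> borel_measurable M"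
proof (subst borel_measurable_euclidean_space, intro ballI)
  fix b :: "real^'d" assume "b \<in> Basis"
  then obtain j where "\<forall>y::real^'d. y \<bullet> b = y $ j" using inner_Basis_vec by blast
  then show "(\<lambda>x. (\<chi> i. f i x) \<bullet> b) \<in> borel_measurable M" using assms by simp
qed

definition fl :: "nat \<Rightarrow> real^'d \<Rightarrow> int^'d" where
  "fl n x = (\<chi> i. \<lfloor>real n * x$i\<rfloor>)"

definition fr :: "nat \<Rightarrow> real^'d \<Rightarrow> real^'d" where
  "fr n x = (\<chi> i. frac (real n * x$i))"

definition UC :: "(real^'d) set" where
  "UC = {u. \<forall>i. 0 \<le> u$i \<and> u$i < 1}"

definition cmb :: "nat \<Rightarrow> int^'d \<Rightarrow> real^'d \<Rightarrow> real^'d" where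
  "cmb n a u = (\<chi> i. (real_of_int (a$i) + u$i) / real n)"

lemma fl_preimage: "{x. fl n x = a} = (\<Inter>i. {x::real^'d. real_of_int (a$i) \<le> real n * x$i \<and> real n * x$i < real_of_int (a$i) + 1})"
  by (auto simp: fl_def vec_eq_iff floor_eq_iff)

lemma fl_preimage_sets[measurable]: "{x. fl n x = a} \<in> sets (borel :: (real^'d) measure)"
  unfolding fl_preimage by (intro sets.countable_INT') auto

lemma fl_measurable[measurable]: "fl n \<in> (borel :: (real^'d) measure) \<rightarrow>\<^sub>M count_space UNIV"
proof (subst measurable_count_space_eq_countable)
  show "countable (UNIV :: (int^'d) set)" by simp
  show "fl n \<in> space borel \<rightarrow> UNIV \<and> (\<forall>a\<in>UNIV. fl n -` {a} \<inter> space borel \<in> sets borel)"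
    using fl_preimage_sets[of n] by (auto simp: vimage_def)
qed

lemma fr_measurable[measurable]: "fr n \<in> (borel :: (real^'d) measure) \<rightarrow>\<^sub>M borel"
  unfolding fr_def frac_def by measurable

lemma UC_sets[measurable]: "UC \<in> sets (borel :: (real^'d) measure)"
proof -
  have UC_eq: "UC = (\<Inter>i. {u::real^'d. 0 \<le> u$i \<and> u$i < 1})" by (auto simp: UC_def)
  show ?thesis unfolding UC_eq by (intro sets.countable_INT') auto
qed

lemma cmb_measurable[measurable]: "cmb n a \<in> (borel :: (real^'d) measure) \<rightarrow>\<^sub>M borel"
  unfolding cmb_def by measurable

lemma fl_cmb: "n > 0 \<Longrightarrow> fl n (cmb n a u) = a \<longleftrightarrow> u \<in> UC"
  by (auto simp: fl_def cmb_def UC_def vec_eq_iff floor_eq_iff)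

lemma fr_cmb: "n > 0 \<Longrightarrow> u \<in> UC \<Longrightarrow> fr n (cmb n a u) = u"
  by (auto simp: fr_def cmb_def UC_def vec_eq_iff frac_eq)

lemma cmb_affine: "cmb n a = (\<lambda>u. (\<chi> i. real_of_int (a$i) / real n) + (1 / real n) *\<^sub>R u)"
  by (auto simp: cmb_def fun_eq_iff vec_eq_iff add_divide_distrib)

lemma nn_integral_cube_a:
  fixes H :: "real^'d \<Rightarrow> ennreal"
  assumes n: "n > 0" and H[measurable]: "H \<in> borel_measurable borel"
  shows "(\<integral>\<^sup>+ x. H x * indicator {x. fl n x = a} x \<partial>lborel)
     = (\<integral>\<^sup>+ u. ennreal (1 / real n ^ CARD('d)) * H (cmb n a u) * indicator UC u \<partial>lborel)"
proof -
  define t :: "real^'d" where "t = (\<chi> i. real_of_int (a$i) / real n)"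
  define c :: real where "c = 1 / real n"
  have c0: "c \<noteq> 0" using n by (simp add: c_def)
  have eq: "lborel = density (distr lborel borel (\<lambda>u. t + c *\<^sub>R u)) (\<lambda>_. ennreal (\<bar>c\<bar> ^ DIM(real^'d)))"
    using lborel_affine[OF c0, of t] by simp
  let ?G = "\<lambda>x. H x * indicator {x. fl n x = a} x"
  have "(\<integral>\<^sup>+ x. ?G x \<partial>lborel) = (\<integral>\<^sup>+ x. ?G x \<partial>density (distr lborel borel (\<lambda>u. t + c *\<^sub>R u)) (\<lambda>_. ennreal (\<bar>c\<bar> ^ DIM(real^'d))))"
    using arg_cong[OF eq, of "\<lambda>M. \<integral>\<^sup>+ x. ?G x \<partial>M"] .
  also have "\<dots> = (\<integral>\<^sup>+ x. ennreal (\<bar>c\<bar> ^ DIM(real^'d)) * ?G x \<partial>distr lborel borel (\<lambda>u. t + c *\<^sub>R u))"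
    by (subst nn_integral_density) auto
  also have "\<dots> = (\<integral>\<^sup>+ u. ennreal (\<bar>c\<bar> ^ DIM(real^'d)) * ?G (t + c *\<^sub>R u) \<partial>lborel)"
    by (subst nn_integral_distr) auto
  also have "\<dots> = (\<integral>\<^sup>+ u. ennreal (1 / real n ^ CARD('d)) * H (cmb n a u) * indicator UC u \<partial>lborel)"
  proof (rule nn_integral_cong)
    fix u :: "real^'d"
    have "t + c *\<^sub>R u = cmb n a u" by (simp add: cmb_affine t_def c_def)
    moreover have "ennreal (\<bar>c\<bar> ^ DIM(real^'d)) = ennreal (1 / real n ^ CARD('d))"
      using n by (simp add: c_def ennreal_power power_one_over)
    ultimately show "ennreal (\<bar>c\<bar> ^ DIM(real^'d)) * ?G (t + c *\<^sub>R u) = ennreal (1 / real n ^ CARD('d)) * H (cmb n a u) * indicator UC u"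
      using fl_cmb[OF n, of a u] by (simp add: indicator_def mult.assoc)
  qed
  finally show ?thesis .
qed

lemma countable_UNIV_intvec[simp]: "countable (UNIV :: (int^'d) set)"
  by simp

lemma fl_graph_sets:
  "{p :: (int^'d) \<times> (real^'d). fl n (snd p) = fst p} \<in> sets (count_space UNIV \<Otimes>\<^sub>M lborel)"
proof -
  have "{p :: (int^'d) \<times> (real^'d). fl n (snd p) = fst p} = (\<Union>a. {a} \<times> {x. fl n x = a})" by auto
  also have "\<dots> \<in> sets (count_space UNIV \<Otimes>\<^sub>M lborel)"
    by (intro sets.countable_UN' pair_measureI) auto
  finally show ?thesis .
qed

lemma nn_integral_cubes:
  fixes H :: "real^'d \<Rightarrow> ennreal"
  assumes n: "n > 0" and H[measurable]: "H \<in> borel_measurable borel"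
  shows "(\<integral>\<^sup>+ x. H x \<partial>lborel) = (\<integral>\<^sup>+ a. (\<integral>\<^sup>+ u. ennreal (1 / real n ^ CARD('d)) * H (cmb n a u) * indicator UC u \<partial>lborel) \<partial>count_space UNIV)"
proof -
  interpret C: sigma_finite_measure "count_space (UNIV :: (int^'d) set)"
    by (rule sigma_finite_measure_count_space_countable) simp
  interpret P: pair_sigma_finite "count_space (UNIV :: (int^'d) set)" "lborel :: (real^'d) measure" ..
  have "(\<integral>\<^sup>+ x. H x \<partial>lborel) = (\<integral>\<^sup>+ x. (\<integral>\<^sup>+ a. H x * indicator {x. fl n x = a} x \<partial>count_space UNIV) \<partial>lborel)"
  proof (rule nn_integral_cong)
    fix x :: "real^'d"
    have "(\<integral>\<^sup>+ a. H x * indicator {x. fl n x = a} x \<partial>count_space UNIV) = (\<integral>\<^sup>+ a. H x * indicator {fl n x} a \<partial>count_space UNIV)"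
      by (intro nn_integral_cong) (auto simp: indicator_def)
    also have "\<dots> = H x" by (subst nn_integral_cmult_indicator) auto
    finally show "H x = (\<integral>\<^sup>+ a. H x * indicator {x. fl n x = a} x \<partial>count_space UNIV)" ..
  qed
  also have "\<dots> = (\<integral>\<^sup>+ a. (\<integral>\<^sup>+ x. H x * indicator {x. fl n x = a} x \<partial>lborel) \<partial>count_space UNIV)"
  proof (rule P.Fubini')
    have "(\<lambda>p :: (int^'d) \<times> (real^'d). H (snd p) * indicator {p. fl n (snd p) = fst p} p) \<in> borel_measurable (count_space UNIV \<Otimes>\<^sub>M lborel)"
      using fl_graph_sets[of n] by measurable
    then show "(\<lambda>(a, x). H x * indicator {x. fl n x = a} x) \<in> borel_measurable (count_space UNIV \<Otimes>\<^sub>M lborel)"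
      by (rule measurable_cong[THEN iffD1, rotated]) (auto simp: indicator_def)
  qed
  also have "\<dots> = (\<integral>\<^sup>+ a. (\<integral>\<^sup>+ u. ennreal (1 / real n ^ CARD('d)) * H (cmb n a u) * indicator UC u \<partial>lborel) \<partial>count_space UNIV)"
    by (intro nn_integral_cong nn_integral_cube_a[OF n H])
  finally show ?thesis .
qed

lemma emeasure_UC: "emeasure lborel (UC :: (real^'d) set) = 1"
proof -
  have B: "(\<Prod>b\<in>(Basis::(real^'d) set). (One - 0) \<bullet> b) = 1"
    by (rule prod.neutral) (auto dest: inner_Basis_vec)
  have le0: "\<forall>b\<in>(Basis::(real^'d) set). 0 \<bullet> b \<le> One \<bullet> b" by (auto dest: inner_Basis_vec)
  have "box 0 One \<subseteq> (UC :: (real^'d) set)" unfolding UC_def mem_box_cart subset_iff by (auto dest: spec less_imp_le)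
  then have "emeasure lborel (box 0 (One::real^'d)) \<le> emeasure lborel (UC :: (real^'d) set)"
    by (intro emeasure_mono) auto
  moreover have "(UC :: (real^'d) set) \<subseteq> cbox 0 One"
  proof
    fix x :: "real^'d" assume "x \<in> UC"
    then have H: "0 \<le> x$i \<and> x$i < 1" for i by (simp add: UC_def)
    show "x \<in> cbox 0 One" unfolding mem_box_cart
    proof
      fix i show "(0::real^'d) $ i \<le> x $ i \<and> x $ i \<le> One $ i" using H[of i] by simp
    qed
  qed
  then have "emeasure lborel (UC :: (real^'d) set) \<le> emeasure lborel (cbox 0 (One::real^'d))"
    by (intro emeasure_mono) auto
  ultimately show ?thesis
    using B le0 by (simp add: emeasure_lborel_box_eq emeasure_lborel_cbox_eq del: One_nth)
qed

lemma cube_sets[measurable]: "{x. fl n x = a} \<in> sets (lborel :: (real^'d) measure)"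
  by simp

lemma emeasure_cube:
  assumes n: "n > 0"
  shows "emeasure lborel {x::real^'d. fl n x = a} = ennreal (1 / real n ^ CARD('d))"
proof -
  have "emeasure lborel {x::real^'d. fl n x = a} = (\<integral>\<^sup>+ x. 1 * indicator {x. fl n x = a} x \<partial>lborel)"
    by simp
  also have "\<dots> = (\<integral>\<^sup>+ u. ennreal (1 / real n ^ CARD('d)) * indicator (UC :: (real^'d) set) u \<partial>lborel)"
    by (subst nn_integral_cube_a[OF n]) auto
  also have "\<dots> = ennreal (1 / real n ^ CARD('d))"
    by (subst nn_integral_cmult_indicator) (auto simp: emeasure_UC)
  finally show ?thesis .
qed

lemma measure_cube:
  assumes n: "n > 0"
  shows "measure lborel {x::real^'d. fl n x = a} = 1 / real n ^ CARD('d)"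
  by (simp add: measure_def emeasure_cube[OF n])

lemma cmb_fl_fr: "n > 0 \<Longrightarrow> cmb n (fl n x) (fr n x) = x"
  by (simp add: cmb_def fl_def fr_def vec_eq_iff frac_def)

lemma fr_UC: "fr n x \<in> UC"
  by (simp add: fr_def UC_def frac_lt_1)

definition F0 :: "nat \<Rightarrow> (int^'d) set" where
  "F0 n = {a. \<forall>i. 0 \<le> a$i \<and> a$i < int n}"

lemma finite_F0: "finite (F0 n :: (int^'d) set)"
proof -
  have "(F0 n :: (int^'d) set) \<subseteq> (\<lambda>g. \<chi> i. g i) ` (PiE UNIV (\<lambda>_. {0..<int n}))"
  proof
    fix a :: "int^'d" assume "a \<in> F0 n"
    then have "(\<lambda>i. a$i) \<in> PiE UNIV (\<lambda>_. {0..<int n})" by (auto simp: F0_def)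
    then show "a \<in> (\<lambda>g. \<chi> i. g i) ` (PiE UNIV (\<lambda>_. {0..<int n}))" by (intro image_eqI[of _ _ "\<lambda>i. a$i"]) auto
  qed
  moreover have "finite (PiE (UNIV::'d set) (\<lambda>_. {0..<int n}))" by (intro finite_PiE) auto
  ultimately show ?thesis by (meson finite_imageI finite_subset)
qed

lemma fl_F0_iff: "n > 0 \<Longrightarrow> fl n x \<in> F0 n \<longleftrightarrow> x \<in> UC"
proof -
  assume n: "n > 0"
  have "0 \<le> \<lfloor>real n * t\<rfloor> \<and> \<lfloor>real n * t\<rfloor> < int n \<longleftrightarrow> 0 \<le> t \<and> t < 1" for t
  proof -
    have "0 \<le> \<lfloor>real n * t\<rfloor> \<longleftrightarrow> 0 \<le> real n * t" by linarith
    also have "\<dots> \<longleftrightarrow> 0 \<le> t" using n by (simp add: zero_le_mult_iff)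
    finally have 1: "0 \<le> \<lfloor>real n * t\<rfloor> \<longleftrightarrow> 0 \<le> t" .
    have "\<lfloor>real n * t\<rfloor> < int n \<longleftrightarrow> real n * t < real n" by (simp add: floor_less_iff)
    also have "\<dots> \<longleftrightarrow> t < 1" using n by simp
    finally show ?thesis using 1 by blast
  qed
  then show ?thesis by (simp add: F0_def fl_def UC_def)
qed

lemma cube_sub_cbox:
  assumes n: "n > 0" and eq: "fl n y = fl n x"
  shows "y \<in> cbox (x - (1 / real n) *\<^sub>R One) (x + (1 / real n) *\<^sub>R One)"
  unfolding mem_box_cart
proof
  fix i
  have fe: "\<lfloor>real n * y$i\<rfloor> = \<lfloor>real n * x$i\<rfloor>" using eq by (simp add: fl_def vec_eq_iff)
  have a: "real_of_int \<lfloor>real n * y$i\<rfloor> \<le> real n * y$i" "real n * y$i < real_of_int \<lfloor>real n * y$i\<rfloor> + 1"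
    "real_of_int \<lfloor>real n * x$i\<rfloor> \<le> real n * x$i" "real n * x$i < real_of_int \<lfloor>real n * x$i\<rfloor> + 1"
    by (simp_all add: of_int_floor_le)
  have b0: "real n * y$i - real n * x$i < 1" "real n * x$i - real n * y$i < 1"
    using a unfolding fe by linarith+
  have b: "real n * (y$i - x$i) < 1" "real n * (x$i - y$i) < 1"
    using b0 by (simp_all add: right_diff_distrib)
  have np: "real n > 0" using n by simp
  have c: "y$i - x$i < 1 / real n" "x$i - y$i < 1 / real n"
    using b np by (simp_all add: less_divide_eq mult.commute)
  show "(x - (1 / real n) *\<^sub>R One) $ i \<le> y $ i \<and> y $ i \<le> (x + (1 / real n) *\<^sub>R One) $ i"
    using c by simp
qed

lemma negligible_face: "negligible {x::real^'d. x$i = c}"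
proof -
  have "{x::real^'d. x$i = c} = {x. x \<bullet> axis i 1 = c}" by (simp add: cart_eq_inner_axis)
  then show ?thesis by (simp add: negligible_standard_hyperplane)
qed



lemma xlnx_bound:
  fixes s :: real assumes s: "0 \<le> s" "s \<le> 1" shows "\<bar>s * ln s\<bar> \<le> 2 * sqrt s"
proof (cases "s = 0")
  case True then show ?thesis by simp
next
  case False
  then have sp: "0 < s" using s by simp
  have sq: "0 < sqrt s" using sp by simp
  have "ln (1 / sqrt s) \<le> 1 / sqrt s - 1" using sq by (intro ln_le_minus_one) simp
  then have "- ln (sqrt s) \<le> 1 / sqrt s - 1" using sq by (simp add: ln_div)
  then have "- ln s \<le> 2 / sqrt s - 2" using sp by (simp add: ln_sqrt)
  then have l1: "- ln s \<le> 2 / sqrt s" using sq by simp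
  have l0: "ln s \<le> 0" using sp s by simp
  have "\<bar>s * ln s\<bar> = s * (- ln s)" using sp l0 by (simp add: abs_mult)
  also have "\<dots> \<le> s * (2 / sqrt s)" using l1 sp by (intro mult_left_mono) auto
  also have "\<dots> = 2 * sqrt s" using sp by (simp add: field_simps real_sqrt_divide sqrt_divide_self_eq)
  finally show ?thesis .
qed

locale dyad = information_space M b for M :: "'a measure" and b :: real +
  fixes X :: "'a \<Rightarrow> real^'d" and f :: "real^'d \<Rightarrow> real"
  assumes distX: "distributed M lborel X (\<lambda>x. ennreal (f x))"
    and f_nn: "\<And>x. 0 \<le> f x"
    and X_range: "\<And>\<omega> i. \<omega> \<in> space M \<Longrightarrow> X \<omega> $ i \<in> {0..1}"
    and f_int: "integrable lborel (\<lambda>x. f x * log b (f x))"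
begin

lemma X_meas[measurable]: "X \<in> M \<rightarrow>\<^sub>M borel"
  using distX by (simp add: distributed_def)

lemma f_meas[measurable]: "f \<in> borel_measurable borel"
  using distributed_real_measurable[OF _ distX] f_nn by simp

definition gj :: "nat \<Rightarrow> (int^'d) \<times> (real^'d) \<Rightarrow> real" where
  "gj n p = (1 / real n ^ CARD('d)) * f (cmb n (fst p) (snd p)) * indicator UC (snd p)"

lemma gj_nn: "0 \<le> gj n p"
  by (simp add: gj_def f_nn)

lemma vec_nth_meas[measurable]: "(\<lambda>x::real^'d. x$i) \<in> borel_measurable borel"
  by (intro borel_measurable_continuous_onI continuous_intros)

lemma cmb_pair_meas[measurable]: "(\<lambda>p. cmb n (fst p) (snd p)) \<in> (count_space UNIV \<Otimes>\<^sub>M lborel) \<rightarrow>\<^sub>M (borel :: (real^'d) measure)"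
proof -
  have "(\<lambda>p::(int^'d) \<times> (real^'d). snd p $ i) \<in> borel_measurable (count_space UNIV \<Otimes>\<^sub>M lborel)" for i
    by (rule measurable_compose[OF measurable_snd]) (simp add: vec_nth_meas)
  then show ?thesis unfolding cmb_def by measurable
qed

lemma gj_meas[measurable]: "gj n \<in> borel_measurable (count_space UNIV \<Otimes>\<^sub>M lborel)"
  unfolding gj_def by measurable

lemma sf_count: "sigma_finite_measure (count_space (UNIV::(int^'d) set))"
  by (rule sigma_finite_measure_count_space_countable) simp

lemma sf_lborel: "sigma_finite_measure (lborel::(real^'d) measure)"
  by unfold_locales

lemma joint: assumes n: "n > 0"
  shows "distributed M (count_space UNIV \<Otimes>\<^sub>M lborel) (\<lambda>\<omega>. (fl n (X \<omega>), fr n (X \<omega>))) (\<lambda>p. ennreal (gj n p))"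
proof (rule distributed_jointI[OF sf_count sf_lborel])
  show "(\<lambda>\<omega>. fl n (X \<omega>)) \<in> M \<rightarrow>\<^sub>M count_space UNIV" by measurable
  show "(\<lambda>\<omega>. fr n (X \<omega>)) \<in> M \<rightarrow>\<^sub>M lborel" by simp
  show "(\<lambda>p. ennreal (gj n p)) \<in> borel_measurable (count_space UNIV \<Otimes>\<^sub>M lborel)" by measurable
  show "AE x in count_space UNIV \<Otimes>\<^sub>M lborel. 0 \<le> ennreal (gj n x)" by simp
  fix A' B' assume A': "A' \<in> sets (count_space (UNIV :: (int^'d) set))" and B': "B' \<in> sets (lborel :: (real^'d) measure)"
  let ?S = "{x. fl n x \<in> A' \<and> fr n x \<in> B'}"
  have S1: "{x. fl n x \<in> A'} \<in> sets (borel :: (real^'d) measure)"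
    using measurable_sets[OF fl_measurable[of n], of A'] by (simp add: vimage_def)
  have S2: "{x. fr n x \<in> B'} \<in> sets (borel :: (real^'d) measure)"
    using measurable_sets[OF fr_measurable[of n], of B'] B' by (simp add: vimage_def)
  have S: "?S \<in> sets lborel" using sets.Int[OF S1 S2] by (simp add: Collect_conj_eq)
  have "{\<omega> \<in> space M. fl n (X \<omega>) \<in> A' \<and> fr n (X \<omega>) \<in> B'} = X -` ?S \<inter> space M" by auto
  then have "emeasure M {\<omega> \<in> space M. fl n (X \<omega>) \<in> A' \<and> fr n (X \<omega>) \<in> B'} = (\<integral>\<^sup>+ x. ennreal (f x) * indicator ?S x \<partial>lborel)"
    using distributed_emeasure[OF distX S] by simp
  also have "\<dots> = (\<integral>\<^sup>+ a. (\<integral>\<^sup>+ u. ennreal (1 / real n ^ CARD('d)) * (ennreal (f (cmb n a u)) * indicator ?S (cmb n a u)) * indicator UC u \<partial>lborel) \<partial>count_space UNIV)"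
    by (rule nn_integral_cubes[OF n]) (use S in measurable)
  also have "\<dots> = (\<integral>\<^sup>+ a. (\<integral>\<^sup>+ u. ennreal (gj n (a, u)) * indicator B' u \<partial>lborel) * indicator A' a \<partial>count_space UNIV)"
  proof (rule nn_integral_cong)
    fix a :: "int^'d"
    have "(\<integral>\<^sup>+ u. ennreal (1 / real n ^ CARD('d)) * (ennreal (f (cmb n a u)) * indicator ?S (cmb n a u)) * indicator UC u \<partial>lborel)
       = (\<integral>\<^sup>+ u. ennreal (gj n (a, u)) * indicator B' u * indicator A' a \<partial>lborel)"
    proof (rule nn_integral_cong)
      fix u :: "real^'d"
      show "ennreal (1 / real n ^ CARD('d)) * (ennreal (f (cmb n a u)) * indicator ?S (cmb n a u)) * indicator UC u
          = ennreal (gj n (a, u)) * indicator B' u * indicator A' a"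
      proof (cases "u \<in> UC")
        case True
        have m: "ennreal (1 / real n ^ CARD('d)) * ennreal (f (cmb n a u)) = ennreal (f (cmb n a u) / real n ^ CARD('d))"
          by (subst ennreal_mult[symmetric]) (auto simp: f_nn)
        show ?thesis using fl_cmb[OF n, of a u] fr_cmb[OF n True, of a] True m
          by (simp add: gj_def indicator_def)
      next
        case False
        then show ?thesis by (simp add: gj_def)
      qed
    qed
    also have "\<dots> = (\<integral>\<^sup>+ u. ennreal (gj n (a, u)) * indicator B' u \<partial>lborel) * indicator A' a"
      by (rule nn_integral_multc) (use B' in measurable)
    finally show "(\<integral>\<^sup>+ u. ennreal (1 / real n ^ CARD('d)) * (ennreal (f (cmb n a u)) * indicator ?S (cmb n a u)) * indicator UC u \<partial>lborel)
       = (\<integral>\<^sup>+ u. ennreal (gj n (a, u)) * indicator B' u \<partial>lborel) * indicator A' a" .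
  qed
  finally show "emeasure M {\<omega> \<in> space M. fl n (X \<omega>) \<in> A' \<and> fr n (X \<omega>) \<in> B'} = (\<integral>\<^sup>+ a. (\<integral>\<^sup>+ u. ennreal (gj n (a, u)) * indicator B' u \<partial>lborel) * indicator A' a \<partial>count_space UNIV)" .
qed

definition pA :: "nat \<Rightarrow> int^'d \<Rightarrow> real" where
  "pA n a = measure M {\<omega> \<in> space M. fl n (X \<omega>) = a}"

definition qB :: "nat \<Rightarrow> real^'d \<Rightarrow> real" where
  "qB n u = enn2real (\<integral>\<^sup>+ a. ennreal (gj n (a, u)) \<partial>count_space UNIV)"

lemma distA: assumes n: "n > 0" shows "distributed M (count_space UNIV) (\<lambda>\<omega>. fl n (X \<omega>)) (\<lambda>a. ennreal (pA n a))"
proof -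
  let ?P = "\<lambda>a. \<integral>\<^sup>+ u. ennreal (gj n (a, u)) \<partial>lborel"
  have D: "distributed M (count_space UNIV) (\<lambda>\<omega>. fl n (X \<omega>)) ?P"
    by (rule distr_marginal1[OF sf_count sf_lborel joint[OF n]])
  have "?P a = ennreal (pA n a)" for a
  proof -
    have "emeasure M ((\<lambda>\<omega>. fl n (X \<omega>)) -` {a} \<inter> space M) = (\<integral>\<^sup>+ a'. ?P a' * indicator {a} a' \<partial>count_space UNIV)"
      by (rule distributed_emeasure[OF D]) simp
    also have "\<dots> = (\<integral>\<^sup>+ a'. ?P a * indicator {a} a' \<partial>count_space UNIV)"
      by (intro nn_integral_cong) (auto simp: indicator_def)
    also have "\<dots> = ?P a" by (subst nn_integral_cmult_indicator) auto
    finally have "?P a = emeasure M {\<omega> \<in> space M. fl n (X \<omega>) = a}" by (simp add: vimage_def Int_def conj_commute)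
    also have "\<dots> = ennreal (pA n a)" unfolding pA_def by (rule emeasure_eq_measure)
    finally show ?thesis .
  qed
  then show ?thesis using D by simp
qed

lemma qB_nn: "0 \<le> qB n u"
  by (simp add: qB_def)

lemma qB_UC: "u \<notin> UC \<Longrightarrow> qB n u = 0"
  by (simp add: qB_def gj_def)

lemma distB: assumes n: "n > 0" shows "distributed M lborel (\<lambda>\<omega>. fr n (X \<omega>)) (\<lambda>u. ennreal (qB n u))"
proof -
  let ?Q = "\<lambda>u. \<integral>\<^sup>+ a. ennreal (gj n (a, u)) \<partial>count_space UNIV"
  have D: "distributed M lborel (\<lambda>\<omega>. fr n (X \<omega>)) ?Q"
    by (rule distr_marginal2[OF sf_count sf_lborel joint[OF n]])
  have Qm: "?Q \<in> borel_measurable lborel" using D by (simp add: distributed_def)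
  have "(\<integral>\<^sup>+ u. ?Q u \<partial>lborel) = emeasure (density lborel ?Q) (space lborel)"
    using Qm by (subst emeasure_density) auto
  also have "\<dots> = emeasure (distr M lborel (\<lambda>\<omega>. fr n (X \<omega>))) (space lborel)"
    using D by (simp add: distributed_def)
  also have "\<dots> = 1" by (subst emeasure_distr) (auto simp: emeasure_space_1)
  finally have "(\<integral>\<^sup>+ u. ?Q u \<partial>lborel) \<noteq> \<infinity>" by simp
  from nn_integral_PInf_AE[OF Qm this]
  have "AE u in lborel. ?Q u = ennreal (qB n u)"
    by eventually_elim (auto simp: qB_def less_top)
  moreover have "(\<lambda>u. ennreal (qB n u)) \<in> borel_measurable lborel"
    unfolding qB_def using Qm by measurable
  ultimately have "distributed M lborel (\<lambda>\<omega>. fr n (X \<omega>)) ?Q \<longleftrightarrow> distributed M lborel (\<lambda>\<omega>. fr n (X \<omega>)) (\<lambda>u. ennreal (qB n u))"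
    using Qm by (intro distributed_cong_density) auto
  then show ?thesis using D by simp
qed

lemma dist_AE_pos:
  fixes Z :: "'a \<Rightarrow> 'c" and h :: "'c \<Rightarrow> real"
  assumes D: "distributed M N Z (\<lambda>x. ennreal (h x))" and hm[measurable]: "h \<in> borel_measurable N"
    and hnn: "\<And>x. 0 \<le> h x"
  shows "AE \<omega> in M. 0 < h (Z \<omega>)"
proof -
  have Zm[measurable]: "Z \<in> M \<rightarrow>\<^sub>M N" using D by (simp add: distributed_def)
  have Sz: "{x \<in> space N. h x = 0} \<in> sets N" by measurable
  have "emeasure M (Z -` {x \<in> space N. h x = 0} \<inter> space M) = (\<integral>\<^sup>+ x. ennreal (h x) * indicator {x \<in> space N. h x = 0} x \<partial>N)"
    by (rule distributed_emeasure[OF D Sz])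
  also have "\<dots> = (\<integral>\<^sup>+ x. 0 \<partial>N)" by (intro nn_integral_cong) (auto simp: indicator_def)
  finally have z: "emeasure M (Z -` {x \<in> space N. h x = 0} \<inter> space M) = 0" by simp
  show ?thesis
  proof (rule AE_I[OF _ z])
    show "{\<omega> \<in> space M. \<not> 0 < h (Z \<omega>)} \<subseteq> Z -` {x \<in> space N. h x = 0} \<inter> space M"
      using hnn measurable_space[OF Zm] by (auto simp: less_le)
    show "Z -` {x \<in> space N. h x = 0} \<inter> space M \<in> sets M" using Sz by measurable
  qed
qed

lemma AE_UC: "AE \<omega> in M. X \<omega> \<in> UC"
proof -
  have "AE \<omega> in M. X \<omega> $ i \<noteq> 1" for i
  proof -
    have Di: "{x::real^'d. x$i = 1} \<in> sets borel"
    proof -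
      have "{x::real^'d. x$i = 1} = (\<lambda>x. x$i) -` {1}" by auto
      then show ?thesis using measurable_sets_borel[OF vec_nth_meas[of i], of "{1}"] by simp
    qed
    have "AE x in lborel. x \<notin> {x::real^'d. x$i = 1}"
      by (rule AE_lborel_not_negligible[OF negligible_face])
    then have "AE x in density lborel (\<lambda>x. ennreal (f x)). x$i \<noteq> 1"
      by (subst AE_density) (auto elim!: eventually_mono)
    moreover have eq: "distr M lborel X = density lborel (\<lambda>x. ennreal (f x))"
      using distX by (simp add: distributed_def)
    ultimately have "AE x in distr M lborel X. x$i \<noteq> 1" by (subst eq)
    then show ?thesis
      by (subst (asm) AE_distr_iff) (use Di in \<open>auto simp: Collect_neg_eq Compl_eq_Diff_UNIV\<close>)
  qed
  then have "AE \<omega> in M. \<forall>i. X \<omega> $ i \<noteq> 1" by (simp add: AE_all_countable)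
  then show ?thesis
  proof (rule AE_mp, intro AE_I2 impI)
    fix \<omega> assume "\<omega> \<in> space M" "\<forall>i. X \<omega> $ i \<noteq> 1"
    then show "X \<omega> \<in> UC" using X_range by (force simp: UC_def less_le)
  qed
qed

definition I :: "nat \<Rightarrow> real" where
  "I n = mutual_information b (count_space UNIV) lborel (\<lambda>\<omega>. fl n (X \<omega>)) (\<lambda>\<omega>. fr n (X \<omega>))"

definition Hf :: real where "Hf = (\<integral>x. f x * log b (f x) \<partial>lborel)"

definition S :: "nat \<Rightarrow> real" where
  "S n = (\<Sum>a\<in>F0 n. pA n a * log b (real n ^ CARD('d) * pA n a))"

lemma psiA: assumes n: "n > 0"
  shows "integrable M (\<lambda>\<omega>. log b (real n ^ CARD('d) * pA n (fl n (X \<omega>))))"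
    and "(\<integral>\<omega>. log b (real n ^ CARD('d) * pA n (fl n (X \<omega>))) \<partial>M) = S n"
proof -
  let ?c = "\<lambda>a. log b (real n ^ CARD('d) * pA n a)"
  let ?g = "\<lambda>\<omega>. \<Sum>a\<in>F0 n. ?c a * indicator {\<omega> \<in> space M. fl n (X \<omega>) = a} \<omega>"
  have flm[measurable]: "(\<lambda>\<omega>. fl n (X \<omega>)) \<in> M \<rightarrow>\<^sub>M count_space UNIV" by measurable
  have m1: "(\<lambda>\<omega>. ?c (fl n (X \<omega>))) \<in> borel_measurable M"
    by (rule measurable_compose[OF flm]) simp
  have sets: "{\<omega> \<in> space M. fl n (X \<omega>) = a} \<in> sets M" for a by measurable
  have m2: "?g \<in> borel_measurable M" using sets by measurable
  have AE: "AE \<omega> in M. ?c (fl n (X \<omega>)) = ?g \<omega>"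
    using AE_UC
  proof (rule AE_mp, intro AE_I2 impI)
    fix \<omega> assume \<omega>: "\<omega> \<in> space M" "X \<omega> \<in> UC"
    then have F: "fl n (X \<omega>) \<in> F0 n" using fl_F0_iff[OF n, of "X \<omega>"] by blast
    have "?g \<omega> = (\<Sum>a\<in>F0 n. if fl n (X \<omega>) = a then ?c a else 0)"
      using \<omega>(1) by (intro sum.cong) (auto simp: indicator_def)
    also have "\<dots> = ?c (fl n (X \<omega>))" using F by (simp add: sum.delta finite_F0)
    finally show "?c (fl n (X \<omega>)) = ?g \<omega>" ..
  qed
  have fin: "emeasure M {\<omega> \<in> space M. fl n (X \<omega>) = a} < \<infinity>" for a
    by (simp add: less_top[symmetric])
  have ig: "integrable M ?g"
    using sets fin by (intro Bochner_Integration.integrable_sum integrable_mult_right integrable_real_indicator) auto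
  show "integrable M (\<lambda>\<omega>. ?c (fl n (X \<omega>)))"
    using integrable_cong_AE[OF m1 m2 AE] ig by simp
  have "(\<integral>\<omega>. ?c (fl n (X \<omega>)) \<partial>M) = (\<integral>\<omega>. ?g \<omega> \<partial>M)"
    by (rule integral_cong_AE[OF m1 m2 AE])
  also have "\<dots> = (\<Sum>a\<in>F0 n. ?c a * pA n a)"
    using sets fin by (subst Bochner_Integration.integral_sum) (auto simp: pA_def)
  also have "\<dots> = S n" by (simp add: S_def mult.commute)
  finally show "(\<integral>\<omega>. ?c (fl n (X \<omega>)) \<partial>M) = S n" .
qed

lemma logfX:
  shows "integrable M (\<lambda>\<omega>. log b (f (X \<omega>)))"
    and "(\<integral>\<omega>. log b (f (X \<omega>)) \<partial>M) = Hf"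
proof -
  have "integrable lborel (\<lambda>x. f x * log b (f x)) \<longleftrightarrow> integrable M (\<lambda>\<omega>. log b (f (X \<omega>)))"
    by (rule distributed_integrable[OF distX]) (auto simp: f_nn)
  then show "integrable M (\<lambda>\<omega>. log b (f (X \<omega>)))" using f_int by simp
  show "(\<integral>\<omega>. log b (f (X \<omega>)) \<partial>M) = Hf"
    unfolding Hf_def by (rule distributed_integral[OF distX, symmetric]) (auto simp: f_nn)
qed

lemma qB_meas[measurable]: assumes n: "n > 0" shows "qB n \<in> borel_measurable borel"
proof -
  have "(\<lambda>u. ennreal (qB n u)) \<in> borel_measurable lborel" using distB[OF n] by (simp add: distributed_def)
  then have "(\<lambda>u. enn2real (ennreal (qB n u))) \<in> borel_measurable lborel" by measurable
  then show ?thesis by (simp add: qB_nn)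
qed

lemma log_ge_gibbs: "0 < t \<Longrightarrow> (1 - 1 / t) / ln b \<le> log b t"
proof -
  assume t: "0 < t"
  have "ln (1 / t) \<le> 1 / t - 1" using t by (intro ln_le_minus_one) simp
  then have "1 - 1 / t \<le> ln t" using t by (simp add: ln_div)
  moreover have "ln b > 0" using b_gt_1 by simp
  ultimately show ?thesis by (simp add: log_def divide_right_mono)
qed

lemma gibbs: assumes n: "n > 0" and int: "integrable M (\<lambda>\<omega>. log b (qB n (fr n (X \<omega>))))"
  shows "0 \<le> (\<integral>\<omega>. log b (qB n (fr n (X \<omega>))) \<partial>M)"
proof -
  let ?Q = "\<lambda>\<omega>. qB n (fr n (X \<omega>))"
  have qm[measurable]: "qB n \<in> borel_measurable borel" by (rule qB_meas[OF n])
  have pos: "AE \<omega> in M. 0 < ?Q \<omega>"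
    by (rule dist_AE_pos[OF distB[OF n]]) (auto simp: qB_nn)
  let ?Z = "{u. qB n u \<noteq> 0}"
  have Zs: "?Z \<in> sets lborel" by measurable
  have ZUC: "?Z \<subseteq> UC" using qB_UC by blast
  have "emeasure lborel ?Z \<le> emeasure lborel (UC :: (real^'d) set)" by (rule emeasure_mono[OF ZUC]) simp
  then have Zfin: "emeasure lborel ?Z \<le> 1" by (simp add: emeasure_UC[where 'd='d])
  then have Zfin': "emeasure lborel ?Z < \<infinity>" by (simp add: le_less_trans)
  have eqZ: "qB n u * (1 / qB n u) = indicator ?Z u" for u by (simp add: indicator_def)
  have "integrable lborel (\<lambda>u. qB n u * (1 / qB n u)) \<longleftrightarrow> integrable M (\<lambda>\<omega>. 1 / ?Q \<omega>)"
    by (rule distributed_integrable[OF distB[OF n]]) (auto simp: qB_nn)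
  moreover have "integrable lborel (\<lambda>u. qB n u * (1 / qB n u))"
    unfolding eqZ using Zs Zfin' by (intro integrable_real_indicator) auto
  ultimately have i1: "integrable M (\<lambda>\<omega>. 1 / ?Q \<omega>)" by simp
  have "(\<integral>\<omega>. 1 / ?Q \<omega> \<partial>M) = (\<integral>u. qB n u * (1 / qB n u) \<partial>lborel)"
    by (rule distributed_integral[OF distB[OF n], symmetric]) (auto simp: qB_nn)
  also have "\<dots> = measure lborel ?Z" unfolding eqZ using Zs by simp
  also have "\<dots> \<le> 1" using Zfin by (simp add: measure_def enn2real_leI)
  finally have E1: "(\<integral>\<omega>. 1 / ?Q \<omega> \<partial>M) \<le> 1" .
  have lb: "0 < ln b" using b_gt_1 by simp
  have "0 \<le> (1 - (\<integral>\<omega>. 1 / ?Q \<omega> \<partial>M)) / ln b" using E1 lb by simp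
  also have "\<dots> = (\<integral>\<omega>. (1 - 1 / ?Q \<omega>) / ln b \<partial>M)"
    using i1 by (simp add: prob_space)
  also have "\<dots> \<le> (\<integral>\<omega>. log b (?Q \<omega>) \<partial>M)"
  proof (rule integral_mono_AE)
    show "integrable M (\<lambda>\<omega>. (1 - 1 / ?Q \<omega>) / ln b)" using i1 by simp
    show "integrable M (\<lambda>\<omega>. log b (?Q \<omega>))" by (rule int)
    show "AE \<omega> in M. (1 - 1 / ?Q \<omega>) / ln b \<le> log b (?Q \<omega>)"
      using pos by eventually_elim (rule log_ge_gibbs)
  qed
  finally show ?thesis .
qed

lemma pA_nn: "0 \<le> pA n a" by (simp add: pA_def)

lemma log_split:
  assumes "0 < F" "0 < P" "0 < Q" "0 < c"
  shows "log b (F / (c * (P * Q))) = log b F - log b (c * P) - log b Q"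
proof -
  have "F / (c * (P * Q)) = F / ((c * P) * Q)" using assms by (simp add: field_simps)
  then show ?thesis using assms by (simp add: log_divide log_mult)
qed

lemma I_bounds: assumes n: "n > 0" shows "0 \<le> I n \<and> I n \<le> max 0 (Hf - S n)"
proof -
  let ?A = "\<lambda>\<omega>. fl n (X \<omega>)" and ?B = "\<lambda>\<omega>. fr n (X \<omega>)"
  let ?L = "\<lambda>p. log b (gj n p / (pA n (fst p) * qB n (snd p)))"
  let ?c = "real n ^ CARD('d)"
  have qm[measurable]: "qB n \<in> borel_measurable borel" by (rule qB_meas[OF n])
  have MI: "I n = (\<integral>p. gj n p * ?L p \<partial>(count_space UNIV \<Otimes>\<^sub>M lborel))"
    unfolding I_def
    by (rule mutual_information_distr[OF sf_count sf_lborel distA[OF n] _ distB[OF n] _ joint[OF n]])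
       (auto simp: pA_nn qB_nn gj_nn)
  have MInn: "integrable (count_space UNIV \<Otimes>\<^sub>M lborel) (\<lambda>p. gj n p * ?L p) \<Longrightarrow> 0 \<le> I n"
    unfolding I_def
    by (rule mutual_information_nonneg[OF sf_count sf_lborel distA[OF n] _ distB[OF n] _ joint[OF n]])
       (auto simp: pA_nn qB_nn gj_nn)
  have pAm: "(\<lambda>p::(int^'d) \<times> (real^'d). pA n (fst p)) \<in> borel_measurable (count_space UNIV \<Otimes>\<^sub>M lborel)"
    by (rule measurable_compose[OF measurable_fst]) simp
  have qBm: "(\<lambda>p::(int^'d) \<times> (real^'d). qB n (snd p)) \<in> borel_measurable (count_space UNIV \<Otimes>\<^sub>M lborel)"
    by (rule measurable_compose[OF measurable_snd]) simp
  have Lm: "?L \<in> borel_measurable (count_space UNIV \<Otimes>\<^sub>M lborel)"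
    using pAm qBm by measurable
  have tr_int: "integrable (count_space UNIV \<Otimes>\<^sub>M lborel) (\<lambda>p. gj n p * ?L p) \<longleftrightarrow> integrable M (\<lambda>\<omega>. ?L (?A \<omega>, ?B \<omega>))"
    by (rule distributed_integrable[OF joint[OF n] Lm]) (auto simp: gj_nn)
  have tr_eq: "(\<integral>p. gj n p * ?L p \<partial>(count_space UNIV \<Otimes>\<^sub>M lborel)) = (\<integral>\<omega>. ?L (?A \<omega>, ?B \<omega>) \<partial>M)"
    by (rule distributed_integral[OF joint[OF n] Lm]) (auto simp: gj_nn)
  have gjX: "gj n (?A \<omega>, ?B \<omega>) = 1 / ?c * f (X \<omega>)" for \<omega>
    using cmb_fl_fr[OF n, of "X \<omega>"] fr_UC[of n "X \<omega>"] by (simp add: gj_def)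
  have pf: "AE \<omega> in M. 0 < f (X \<omega>)" by (rule dist_AE_pos[OF distX]) (auto simp: f_nn)
  have pp: "AE \<omega> in M. 0 < pA n (?A \<omega>)" by (rule dist_AE_pos[OF distA[OF n]]) (auto simp: pA_nn)
  have pq: "AE \<omega> in M. 0 < qB n (?B \<omega>)" by (rule dist_AE_pos[OF distB[OF n]]) (auto simp: qB_nn)
  have c0: "0 < ?c" using n by simp
  have AEdec: "AE \<omega> in M. ?L (?A \<omega>, ?B \<omega>) = log b (f (X \<omega>)) - log b (?c * pA n (?A \<omega>)) - log b (qB n (?B \<omega>))"
    using pf pp pq by eventually_elim (simp add: gjX log_split[OF _ _ _ c0])
  have ipsi: "integrable M (\<lambda>\<omega>. log b (?c * pA n (?A \<omega>)))" by (rule psiA(1)[OF n])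
  have ilf: "integrable M (\<lambda>\<omega>. log b (f (X \<omega>)))" by (rule logfX(1))
  have LMm: "(\<lambda>\<omega>. ?L (?A \<omega>, ?B \<omega>)) \<in> borel_measurable M"
    by (rule measurable_compose[OF _ Lm]) measurable
  show ?thesis
  proof (cases "integrable M (\<lambda>\<omega>. ?L (?A \<omega>, ?B \<omega>))")
    case True
    have AEq: "AE \<omega> in M. log b (qB n (?B \<omega>)) = log b (f (X \<omega>)) - log b (?c * pA n (?A \<omega>)) - ?L (?A \<omega>, ?B \<omega>)"
      using AEdec by eventually_elim simp
    have iq: "integrable M (\<lambda>\<omega>. log b (qB n (?B \<omega>)))"
    proof (subst integrable_cong_AE[OF _ _ AEq])
      show "integrable M (\<lambda>\<omega>. log b (f (X \<omega>)) - log b (?c * pA n (?A \<omega>)) - ?L (?A \<omega>, ?B \<omega>))"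
        using ilf ipsi True by (intro Bochner_Integration.integrable_diff)
    qed (use ilf ipsi True LMm in \<open>auto intro: borel_measurable_integrable\<close>)
    have "I n = (\<integral>\<omega>. ?L (?A \<omega>, ?B \<omega>) \<partial>M)" using MI tr_eq by simp
    also have "\<dots> = (\<integral>\<omega>. log b (f (X \<omega>)) - log b (?c * pA n (?A \<omega>)) - log b (qB n (?B \<omega>)) \<partial>M)"
      by (rule integral_cong_AE[OF LMm _ AEdec])
         (use ilf ipsi iq in \<open>auto intro!: borel_measurable_diff intro: borel_measurable_integrable\<close>)
    also have "\<dots> = Hf - S n - (\<integral>\<omega>. log b (qB n (?B \<omega>)) \<partial>M)"
      using ilf ipsi iq by (simp add: logfX(2) psiA(2)[OF n])
    also have "\<dots> \<le> Hf - S n" using gibbs[OF n iq] by simp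
    finally have up: "I n \<le> Hf - S n" .
    have "0 \<le> I n" using MInn tr_int True by simp
    then show ?thesis using up by simp
  next
    case False
    then have "I n = 0" using MI tr_int by (simp add: not_integrable_integral_eq)
    then show ?thesis by simp
  qed
qed

lemma f_integrable: "integrable lborel f"
proof (rule integrableI_nonneg)
  show "f \<in> borel_measurable lborel" by simp
  show "AE x in lborel. 0 \<le> f x" by (simp add: f_nn)
  have "(\<integral>\<^sup>+ x. ennreal (f x) \<partial>lborel) = emeasure (density lborel (\<lambda>x. ennreal (f x))) (space lborel)"
    by (subst emeasure_density) auto
  also have "\<dots> = emeasure (distr M lborel X) (space lborel)"
    using distX by (simp add: distributed_def)
  also have "\<dots> = 1" by (subst emeasure_distr) (auto simp: emeasure_space_1)
  finally show "(\<integral>\<^sup>+ x. ennreal (f x) \<partial>lborel) < \<infinity>" by simp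
qed

lemma pA_int: assumes n: "n > 0"
  shows "pA n a = (\<integral>x. f x * indicator {x. fl n x = a} x \<partial>lborel)"
proof -
  have cs: "{x. fl n x = a} \<in> sets (lborel :: (real^'d) measure)" by simp
  have "{\<omega> \<in> space M. fl n (X \<omega>) = a} = X -` {x. fl n x = a} \<inter> space M" by auto
  then have "emeasure M {\<omega> \<in> space M. fl n (X \<omega>) = a} = (\<integral>\<^sup>+ x. ennreal (f x) * indicator {x. fl n x = a} x \<partial>lborel)"
    using distributed_emeasure[OF distX cs] by simp
  also have "\<dots> = (\<integral>\<^sup>+ x. ennreal (f x * indicator {x. fl n x = a} x) \<partial>lborel)"
    by (intro nn_integral_cong) (auto simp: indicator_def)
  finally have e: "emeasure M {\<omega> \<in> space M. fl n (X \<omega>) = a} = (\<integral>\<^sup>+ x. ennreal (f x * indicator {x. fl n x = a} x) \<partial>lborel)" .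
  show ?thesis
    unfolding pA_def measure_def e
    by (rule integral_eq_nn_integral[symmetric]) (auto simp: f_nn)
qed

lemma dens_conv:
  "AE x in lborel. (\<lambda>k. real (2^k) ^ CARD('d) * pA (2^k) (fl (2^k) x)) \<longlonglongrightarrow> f x"
  using lebesgue_point[OF f_integrable]
proof (rule AE_mp, intro AE_I2 impI)
  fix x :: "real^'d"
  let ?G = "\<lambda>h. (LINT w:cbox (x - h *\<^sub>R One) (x + h *\<^sub>R One)|lborel. \<bar>f w - f x\<bar>) / h ^ CARD('d)"
  assume G: "(?G \<longlongrightarrow> 0) (at_right 0)"
  have hlim: "filterlim (\<lambda>k::nat. 1 / real (2^k)) (at_right 0) sequentially"
  proof (rule tendsto_imp_filterlim_at_right)
    show "(\<lambda>k::nat. 1 / real (2^k)) \<longlonglongrightarrow> 0"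
      by (simp add: LIMSEQ_divide_realpow_zero)
    show "\<forall>\<^sub>F k in sequentially. 1 / real (2 ^ k :: nat) > 0" by simp
  qed
  have Glim: "(\<lambda>k. ?G (1 / real (2^k))) \<longlonglongrightarrow> 0"
    by (rule filterlim_compose[OF G hlim])
  have bound: "\<bar>real n ^ CARD('d) * pA n (fl n x) - f x\<bar> \<le> ?G (1 / real n)" if n: "n > 0" for n :: nat
  proof -
    let ?Q = "{y. fl n y = fl n x}"
    let ?C = "cbox (x - (1 / real n) *\<^sub>R One) (x + (1 / real n) *\<^sub>R One)"
    let ?c = "real n ^ CARD('d)"
    have c0: "?c > 0" using n by simp
    have iQ: "integrable lborel (\<lambda>y. f y * indicator ?Q y)"
      by (rule integrable_real_mult_indicator[OF _ f_integrable]) simp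
    have iQc: "integrable lborel (\<lambda>y. f x * indicator ?Q y)"
      using emeasure_cube[OF n, of "fl n x"] by (intro integrable_mult_right integrable_real_indicator) auto
    have iQa: "integrable lborel (\<lambda>y. indicator ?Q y * \<bar>f y - f x\<bar>)"
      by (rule integrable_ind_abs[OF f_integrable]) (use emeasure_cube[OF n, of "fl n x"] in auto)
    have iCa: "integrable lborel (\<lambda>y. indicator ?C y * \<bar>f y - f x\<bar>)"
      by (rule integrable_ind_abs[OF f_integrable]) (use emeasure_lborel_cbox_finite in auto)
    have "?c * pA n (fl n x) - f x = ?c * ((\<integral>y. f y * indicator ?Q y \<partial>lborel) - (\<integral>y. f x * indicator ?Q y \<partial>lborel))"
      using c0 by (simp add: pA_int[OF n] measure_cube[OF n] right_diff_distrib)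
    also have "\<dots> = ?c * (\<integral>y. (f y - f x) * indicator ?Q y \<partial>lborel)"
      using iQ iQc by (simp add: left_diff_distrib)
    finally have eq: "?c * pA n (fl n x) - f x = ?c * (\<integral>y. (f y - f x) * indicator ?Q y \<partial>lborel)" .
    have "\<bar>\<integral>y. (f y - f x) * indicator ?Q y \<partial>lborel\<bar> \<le> (\<integral>y. \<bar>(f y - f x) * indicator ?Q y\<bar> \<partial>lborel)"
      by (rule integral_abs_bound)
    also have "\<dots> = (\<integral>y. indicator ?Q y * \<bar>f y - f x\<bar> \<partial>lborel)"
      by (intro Bochner_Integration.integral_cong) (auto simp: indicator_def)
    also have "\<dots> \<le> (\<integral>y. indicator ?C y * \<bar>f y - f x\<bar> \<partial>lborel)"
    proof (rule integral_mono[OF iQa iCa])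
      fix y show "indicator ?Q y * \<bar>f y - f x\<bar> \<le> indicator ?C y * \<bar>f y - f x\<bar>"
        using cube_sub_cbox[OF n, of y x] by (auto simp: indicator_def)
    qed
    finally have le: "\<bar>\<integral>y. (f y - f x) * indicator ?Q y \<partial>lborel\<bar> \<le> (\<integral>y. indicator ?C y * \<bar>f y - f x\<bar> \<partial>lborel)" .
    have "\<bar>?c * pA n (fl n x) - f x\<bar> = ?c * \<bar>\<integral>y. (f y - f x) * indicator ?Q y \<partial>lborel\<bar>"
      unfolding eq using c0 by (simp add: abs_mult)
    also have "\<dots> \<le> ?c * (\<integral>y. indicator ?C y * \<bar>f y - f x\<bar> \<partial>lborel)"
      using le c0 by simp
    also have "\<dots> = ?G (1 / real n)"
      using n by (simp add: set_lebesgue_integral_def power_one_over)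
    finally show ?thesis .
  qed
  show "(\<lambda>k. real (2^k) ^ CARD('d) * pA (2^k) (fl (2^k) x)) \<longlonglongrightarrow> f x"
  proof (rule LIM_zero_cancel)
    show "(\<lambda>k. real (2^k) ^ CARD('d) * pA (2^k) (fl (2^k) x) - f x) \<longlonglongrightarrow> 0"
    proof (rule Lim_null_comparison[OF _ Glim])
      show "\<forall>\<^sub>F k in sequentially. norm (real (2^k) ^ CARD('d) * pA (2^k) (fl (2^k) x) - f x) \<le> ?G (1 / real (2^k))"
      proof (intro always_eventually allI)
        fix k :: nat
        show "norm (real (2^k) ^ CARD('d) * pA (2^k) (fl (2^k) x) - f x) \<le> ?G (1 / real (2^k))"
          using bound[of "2^k"] by simp
      qed
    qed
  qed
qed

lemma xlogx_tendsto:
  fixes s :: "nat \<Rightarrow> real"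
  assumes lim: "s \<longlonglongrightarrow> t" and snn: "\<And>k. 0 \<le> s k" and t: "0 \<le> t"
  shows "(\<lambda>k. s k * log b (s k)) \<longlonglongrightarrow> t * log b t"
proof (cases "t = 0")
  case False
  then have tp: "0 < t" using t by simp
  show ?thesis using b_gt_1 tp by (intro tendsto_intros lim) auto
next
  case True
  have lb: "0 < ln b" using b_gt_1 by simp
  have ev: "\<forall>\<^sub>F k in sequentially. s k < 1" using lim True by (intro order_tendstoD(2)) auto
  have "(\<lambda>k. s k * log b (s k)) \<longlonglongrightarrow> 0"
  proof (rule Lim_null_comparison)
    show "\<forall>\<^sub>F k in sequentially. norm (s k * log b (s k)) \<le> 2 * sqrt (s k) / ln b"
      using ev
    proof eventually_elim
      case (elim k)
      have "norm (s k * log b (s k)) = \<bar>s k * ln (s k)\<bar> / ln b" using lb by (simp add: log_def abs_mult)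
      also have "\<dots> \<le> 2 * sqrt (s k) / ln b"
        using xlnx_bound[of "s k"] snn[of k] elim lb by (intro divide_right_mono) auto
      finally show ?case .
    qed
    show "(\<lambda>k. 2 * sqrt (s k) / ln b) \<longlonglongrightarrow> 0"
      using tendsto_divide[OF tendsto_mult[OF tendsto_const tendsto_real_sqrt[OF lim]] tendsto_const, of "ln b" "2"]
        True lb by simp
  qed
  then show ?thesis using True by simp
qed

lemma xlogx_lower: "0 \<le> t \<Longrightarrow> - (1 / ln b) \<le> t * log b t"
proof -
  assume t: "0 \<le> t"
  have lb: "0 < ln b" using b_gt_1 by simp
  have "t - 1 \<le> t * ln t"
  proof (cases "t = 0")
    case False
    then have tp: "0 < t" using t by simp
    have "ln (1 / t) \<le> 1 / t - 1" using tp by (intro ln_le_minus_one) simp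
    then have "1 - 1 / t \<le> ln t" using tp by (simp add: ln_div)
    then have "t * (1 - 1 / t) \<le> t * ln t" using tp by (intro mult_left_mono) auto
    then show ?thesis using tp by (simp add: right_diff_distrib)
  qed simp
  then have "-1 \<le> t * ln t" using t by simp
  then have "-1 / ln b \<le> t * ln t / ln b" using lb by (intro divide_right_mono) auto
  then show ?thesis by (simp add: log_def)
qed

lemma S_int: assumes n: "n > 0"
  defines "c \<equiv> real n ^ CARD('d)"
  shows "integrable lborel (\<lambda>x. indicator UC x * ((c * pA n (fl n x)) * log b (c * pA n (fl n x))))"
    and "S n = (\<integral>x. indicator UC x * ((c * pA n (fl n x)) * log b (c * pA n (fl n x))) \<partial>lborel)"
proof -
  let ?h = "\<lambda>a. (c * pA n a) * log b (c * pA n a)"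
  let ?F = "\<lambda>x. indicator UC x * ?h (fl n x)"
  let ?G = "\<lambda>x. \<Sum>a\<in>F0 n. ?h a * indicator {x. fl n x = a} x"
  have c0: "0 < c" using n by (simp add: c_def)
  have eq: "?F x = ?G x" for x
  proof (cases "x \<in> UC")
    case True
    then have F: "fl n x \<in> F0 n" using fl_F0_iff[OF n, of x] by blast
    have "?G x = (\<Sum>a\<in>F0 n. if fl n x = a then ?h a else 0)"
      by (intro sum.cong) (auto simp: indicator_def)
    also have "\<dots> = ?h (fl n x)" using F by (simp add: sum.delta finite_F0)
    finally show ?thesis using True by simp
  next
    case False
    then have F: "fl n x \<notin> F0 n" using fl_F0_iff[OF n, of x] by blast
    have "?G x = (\<Sum>a\<in>(F0 n :: (int^'d) set). 0)"
    proof (rule sum.cong[OF refl])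
      fix a :: "int^'d" assume "a \<in> F0 n"
      then have "fl n x \<noteq> a" using F by blast
      then show "?h a * indicator {x. fl n x = a} x = 0" by (simp add: indicator_def)
    qed
    then show ?thesis using False by simp
  qed
  have fin: "emeasure lborel {x::real^'d. fl n x = a} < \<infinity>" for a by (simp add: emeasure_cube[OF n])
  have iG: "integrable lborel ?G"
    using fin by (intro Bochner_Integration.integrable_sum integrable_mult_right integrable_real_indicator) auto
  then show "integrable lborel ?F" by (simp add: eq)
  have "(\<integral>x. ?F x \<partial>lborel) = (\<integral>x. ?G x \<partial>lborel)" by (simp add: eq)
  also have "\<dots> = (\<Sum>a\<in>F0 n. ?h a * (1 / c))"
    using fin by (subst Bochner_Integration.integral_sum) (auto simp: measure_cube[OF n] c_def)
  also have "\<dots> = S n" unfolding S_def using c0 by (intro sum.cong) (auto simp: field_simps c_def)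
  finally show "S n = (\<integral>x. ?F x \<partial>lborel)" ..
qed

lemma f_zero_outside: "AE x in lborel. x \<notin> UC \<longrightarrow> f x = 0"
proof -
  have UCs: "- UC \<in> sets (lborel :: (real^'d) measure)" using UC_sets by simp
  have "emeasure M {\<omega> \<in> space M. \<not> X \<omega> \<in> UC} = 0" by (rule AE_E2[OF AE_UC])
  moreover have "{\<omega> \<in> space M. \<not> X \<omega> \<in> UC} = X -` (- UC) \<inter> space M" by auto
  ultimately have "(\<integral>\<^sup>+ x. ennreal (f x) * indicator (- UC) x \<partial>lborel) = 0"
    using distributed_emeasure[OF distX UCs] by simp
  then have "AE x in lborel. ennreal (f x) * indicator (- UC) x = 0"
    by (subst (asm) nn_integral_0_iff_AE) (use UCs in auto)
  then show ?thesis by eventually_elim (auto simp: indicator_def f_nn)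
qed

lemma Hf_int:
  shows "integrable lborel (\<lambda>x. indicator UC x * (f x * log b (f x)))"
    and "Hf = (\<integral>x. indicator UC x * (f x * log b (f x)) \<partial>lborel)"
proof -
  have AE: "AE x in lborel. f x * log b (f x) = indicator UC x * (f x * log b (f x))"
    using f_zero_outside by eventually_elim (auto simp: indicator_def)
  show "integrable lborel (\<lambda>x. indicator UC x * (f x * log b (f x)))"
    using integrable_cong_AE[OF _ _ AE] f_int by simp
  show "Hf = (\<integral>x. indicator UC x * (f x * log b (f x)) \<partial>lborel)"
    unfolding Hf_def by (rule integral_cong_AE[OF _ _ AE]) auto
qed

lemma S_lower: assumes e: "0 < e" shows "eventually (\<lambda>k. Hf - e < S (2^k)) sequentially"
proof -
  define K where "K = 1 / ln b"
  define s where "s k x = real (2^k) ^ CARD('d) * pA (2^k) (fl (2^k) x)" for k x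
  define u where "u k x = ennreal (indicator UC x * (s k x * log b (s k x) + K))" for k x
  define v where "v x = ennreal (indicator UC x * (f x * log b (f x) + K))" for x
  have lb: "0 < ln b" using b_gt_1 by simp
  have s_nn: "0 \<le> s k x" for k x by (simp add: s_def pA_nn)
  have Kb: "0 \<le> t * log b t + K" if "0 \<le> t" for t using xlogx_lower[OF that] by (simp add: K_def)
  have sm[measurable]: "s k \<in> borel_measurable borel" for k
  proof -
    have "(\<lambda>x. pA (2^k) (fl (2^k) x)) \<in> borel_measurable borel"
      by (rule measurable_compose[OF fl_measurable]) simp
    then show ?thesis unfolding s_def by measurable
  qed
  have um: "u k \<in> borel_measurable lborel" for k unfolding u_def by measurable
  have iUC: "integrable lborel (\<lambda>x::real^'d. indicator UC x * K)"
    by (intro integrable_mult_left integrable_real_indicator) (auto simp: emeasure_UC[where 'd='d])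
  have nn_u: "integral\<^sup>N lborel (u k) = ennreal (S (2^k) + K)" for k
  proof -
    have i1: "integrable lborel (\<lambda>x. indicator UC x * (s k x * log b (s k x)))"
      using S_int(1)[of "2^k"] by (simp add: s_def)
    have e1: "S (2^k) = (\<integral>x. indicator UC x * (s k x * log b (s k x)) \<partial>lborel)"
      using S_int(2)[of "2^k"] by (simp add: s_def)
    have int: "integrable lborel (\<lambda>x. indicator UC x * (s k x * log b (s k x) + K))"
      using Bochner_Integration.integrable_add[OF i1 iUC] by (simp add: distrib_left)
    have "integral\<^sup>N lborel (u k) = ennreal (\<integral>x. indicator UC x * (s k x * log b (s k x) + K) \<partial>lborel)"
      unfolding u_def by (rule nn_integral_eq_integral[OF int]) (auto simp: Kb s_nn)
    also have "(\<integral>x. indicator UC x * (s k x * log b (s k x) + K) \<partial>lborel) = S (2^k) + K"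
      using i1 iUC e1 emeasure_UC[where 'd='d] by (simp add: distrib_left measure_def)
    finally show ?thesis .
  qed
  have SK: "0 \<le> S (2^k) + K" for k
  proof -
    have "(\<integral>x. indicator UC x * (s k x * log b (s k x) + K) \<partial>lborel) \<ge> 0"
      by (rule Bochner_Integration.integral_nonneg) (auto simp: Kb s_nn)
    moreover have "(\<integral>x. indicator UC x * (s k x * log b (s k x) + K) \<partial>lborel) = S (2^k) + K"
    proof -
      have i1: "integrable lborel (\<lambda>x. indicator UC x * (s k x * log b (s k x)))"
        using S_int(1)[of "2^k"] by (simp add: s_def)
      have e1: "S (2^k) = (\<integral>x. indicator UC x * (s k x * log b (s k x)) \<partial>lborel)"
        using S_int(2)[of "2^k"] by (simp add: s_def)
      show ?thesis using i1 iUC e1 emeasure_UC[where 'd='d] by (simp add: distrib_left measure_def)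
    qed
    ultimately show ?thesis by simp
  qed
  have nn_v: "integral\<^sup>N lborel v = ennreal (Hf + K)"
  proof -
    have int: "integrable lborel (\<lambda>x. indicator UC x * (f x * log b (f x) + K))"
      using Bochner_Integration.integrable_add[OF Hf_int(1) iUC] by (simp add: distrib_left)
    have "integral\<^sup>N lborel v = ennreal (\<integral>x. indicator UC x * (f x * log b (f x) + K) \<partial>lborel)"
      unfolding v_def by (rule nn_integral_eq_integral[OF int]) (auto simp: Kb f_nn)
    also have "(\<integral>x. indicator UC x * (f x * log b (f x) + K) \<partial>lborel) = Hf + K"
      using Hf_int iUC emeasure_UC[where 'd='d] by (simp add: distrib_left measure_def)
    finally show ?thesis .
  qed
  have AEl: "AE x in lborel. liminf (\<lambda>k. u k x) = v x"
    using dens_conv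
  proof eventually_elim
    case (elim x)
    have "(\<lambda>k. s k x) \<longlonglongrightarrow> f x" using elim by (simp add: s_def)
    then have "(\<lambda>k. s k x * log b (s k x)) \<longlonglongrightarrow> f x * log b (f x)"
      by (rule xlogx_tendsto) (auto simp: s_nn f_nn)
    then have "(\<lambda>k. indicator UC x * (s k x * log b (s k x) + K)) \<longlonglongrightarrow> indicator UC x * (f x * log b (f x) + K)"
      by (intro tendsto_mult_left tendsto_add[OF _ tendsto_const])
    then have "(\<lambda>k. u k x) \<longlonglongrightarrow> v x"
      unfolding u_def v_def by (rule tendsto_ennrealI)
    then show ?case by (intro lim_imp_Liminf) auto
  qed
  have "ennreal (Hf + K) = (\<integral>\<^sup>+ x. liminf (\<lambda>k. u k x) \<partial>lborel)"
    unfolding nn_v[symmetric] by (rule nn_integral_cong_AE) (use AEl in \<open>auto elim!: eventually_mono\<close>)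
  also have "\<dots> \<le> liminf (\<lambda>k. integral\<^sup>N lborel (u k))"
    by (rule nn_integral_liminf[OF um])
  also have "\<dots> = liminf (\<lambda>k. ennreal (S (2^k) + K))" by (simp add: nn_u)
  finally have lim: "ennreal (Hf + K) \<le> liminf (\<lambda>k. ennreal (S (2^k) + K))" .
  show ?thesis
  proof (cases "Hf + K - e < 0")
    case True
    then show ?thesis using SK by (intro always_eventually allI) (smt (verit))
  next
    case False
    have "ennreal (Hf + K - e) < ennreal (Hf + K)"
      using False e by (subst ennreal_less_iff) auto
    then have "ennreal (Hf + K - e) < liminf (\<lambda>k. ennreal (S (2^k) + K))" using lim by simp
    then have "eventually (\<lambda>k. ennreal (Hf + K - e) < ennreal (S (2^k) + K)) sequentially"
      by (rule less_LiminfD)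
    then show ?thesis
      by eventually_elim (use False in \<open>simp add: ennreal_less_iff\<close>)
  qed
qed

lemma I_lim: "(\<lambda>k. I (2^k)) \<longlonglongrightarrow> 0"
proof (rule tendsto_sandwich[where f="\<lambda>_. 0" and h="\<lambda>k. max 0 (Hf - S (2^k))"])
  show "\<forall>\<^sub>F k in sequentially. 0 \<le> I (2^k)" using I_bounds by simp
  show "\<forall>\<^sub>F k in sequentially. I (2^k) \<le> max 0 (Hf - S (2^k))" using I_bounds by simp
  show "(\<lambda>_. 0) \<longlonglongrightarrow> (0::real)" by simp
  show "(\<lambda>k. max 0 (Hf - S (2^k))) \<longlonglongrightarrow> 0"
    unfolding tendsto_iff
  proof (intro allI impI)
    fix e :: real assume e: "0 < e"
    show "\<forall>\<^sub>F k in sequentially. dist (max 0 (Hf - S (2 ^ k))) 0 < e"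
      using S_lower[OF e] by eventually_elim (use e in \<open>auto simp: dist_real_def\<close>)
  qed
qed

end

theorem mainTheorem9:
  fixes M :: "'a measure" and b :: real and X :: "'a \<Rightarrow> real ^ 'd"
    and f :: "real ^ 'd \<Rightarrow> real"
  assumes info: "information_space M b"
    and range01: "\<forall>\<omega>\<in>space M. \<forall>i. X \<omega> $ i \<in> {0..1}"
    and cont_fin_h: "information_space.finite_entropy M b lborel X f"
    and fin_H: "\<exists>g. information_space.finite_entropy M b (count_space UNIV)
                   (\<lambda>\<omega>. (\<chi> i. \<lfloor>X \<omega> $ i\<rfloor>) :: int ^ 'd) g"
  shows "(\<lambda>k::nat. prob_space.mutual_information M b (count_space UNIV) lborel
            (\<lambda>\<omega>. (\<chi> i. \<lfloor>2 ^ k * X \<omega> $ i\<rfloor>) :: int ^ 'd)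
            (\<lambda>\<omega>. \<chi> i. frac (2 ^ k * X \<omega> $ i)))
         \<longlonglongrightarrow> 0"
proof -
  interpret information_space M b by (rule info)
  have fe: "distributed M lborel X f" "integrable lborel (\<lambda>x. f x * log b (f x))" "\<forall>x\<in>space lborel. 0 \<le> f x"
    using cont_fin_h by (auto simp: finite_entropy_def)
  interpret D: dyad M b X f
    by unfold_locales (use fe range01 in auto)
  have "(\<lambda>k. D.I (2^k)) \<longlonglongrightarrow> 0" by (rule D.I_lim)
  moreover have "D.I (2^k) = prob_space.mutual_information M b (count_space UNIV) lborel
            (\<lambda>\<omega>. (\<chi> i. \<lfloor>2 ^ k * X \<omega> $ i\<rfloor>) :: int ^ 'd)
            (\<lambda>\<omega>. \<chi> i. frac (2 ^ k * X \<omega> $ i))" for k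
    by (simp add: D.I_def fl_def fr_def)
  ultimately show ?thesis by simp
qed

end
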